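(* Let $G$ be a countable vertex set with fixed vertex $o$, and let $c,b$ be conductance functions on $G$ with $b_{xy}\le c_{xy}$ for all $x,y$, such that $(G,c)$ and $(G,b)$ are connected locally finite networks. Let $\Delta_b^{(c)}$ denote the adjoint of $\Delta_b$ with respect to the inner product of $\mathcal H_{\mathcal E_c}$, i.e. $\langle \Delta_b^{(c)}w,u\rangle_{\mathcal E_c}=\langle w,\Delta_b u\rangle_{\mathcal E_c}$. Then $\mathrm{span}\{v_x^{(c)}\}_{x\in G}\subseteq\mathrm{dom}\,\Delta_b^{(c)}$ and $\Delta_b^{(c)}v_x^{(c)}=\mathcal I^*(\delta_x-\delta_o)$ for every $x\in G$, where $\mathcal I^*:\mathcal H_{\mathcal E_b}\to\mathcal H_{\mathcal E_c}$ is the adjoint of the inclusion $\mathcal I:\mathcal H_{\mathcal E_c}\to\mathcal H_{\mathcal E_b}$.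
   Context: A conductance function on a countable set $G$ is a symmetric map $c:G\times G\to[0,\infty)$ with $c_{xx}=0$; $x\sim y$ iff $c_{xy}>0$; locally finite and connected. $\mathcal E_c(u,v)=\frac12\sum_{x,y}c_{xy}\overline{(u(x)-u(y))}(v(x)-v(y))$; $\mathcal H_{\mathcal E_c}$ is the Hilbert space of finite-energy functions modulo constants with inner product $\mathcal E_c$. $v_x^{(c)}$ is the unique element of $\mathcal H_{\mathcal E_c}$ with $\langle v_x^{(c)},u\rangle_{\mathcal E_c}=u(x)-u(o)$ for all $u$. The Laplacian is $(\Delta_b v)(x)=\sum_{y}b_{xy}(v(x)-v(y))$. $\delta_x$ is the indicator function of $\{x\}$, viewed in $\mathcal H_{\mathcal E_b}$. Same notation for $b$. *)

theory Defs
  imports "HOL-Analysis.Analysis"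
begin

definition conductance :: "('a \<Rightarrow> 'a \<Rightarrow> real) \<Rightarrow> bool" where
  "conductance c \<longleftrightarrow> (\<forall>x y. c x y = c y x) \<and> (\<forall>x y. 0 \<le> c x y) \<and> (\<forall>x. c x x = 0)"

definition locally_finite :: "('a \<Rightarrow> 'a \<Rightarrow> real) \<Rightarrow> bool" where
  "locally_finite c \<longleftrightarrow> (\<forall>x. finite {y. 0 < c x y})"

definition net_connected :: "('a \<Rightarrow> 'a \<Rightarrow> real) \<Rightarrow> bool" where
  "net_connected c \<longleftrightarrow> (\<forall>x y. (x, y) \<in> {(p, q). 0 < c p q}\<^sup>*)"

text \<open>Finite energy functions (elements of H_E are these modulo constants).\<close>

definition finite_energy :: "('a \<Rightarrow> 'a \<Rightarrow> real) \<Rightarrow> ('a \<Rightarrow> complex) \<Rightarrow> bool" where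
  "finite_energy c u \<longleftrightarrow>
     (\<lambda>(x, y). c x y * (cmod (u x - u y))\<^sup>2) summable_on (UNIV :: ('a \<times> 'a) set)"

definition energy :: "('a \<Rightarrow> 'a \<Rightarrow> real) \<Rightarrow> ('a \<Rightarrow> complex) \<Rightarrow> ('a \<Rightarrow> complex) \<Rightarrow> complex" where
  "energy c u v = (1/2) * (\<Sum>\<^sub>\<infinity>(x, y)\<in>(UNIV :: ('a \<times> 'a) set).
       complex_of_real (c x y) * (cnj (u x - u y) * (v x - v y)))"

text \<open>The reproducing kernel v_x (normalised representative with value 0 at o0).\<close>

definition reprod :: "('a \<Rightarrow> 'a \<Rightarrow> real) \<Rightarrow> 'a \<Rightarrow> 'a \<Rightarrow> ('a \<Rightarrow> complex)" where
  "reprod c o0 x = (THE v. finite_energy c v \<and> v o0 = 0 \<and>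
      (\<forall>u. finite_energy c u \<longrightarrow> energy c v u = u x - u o0))"

definition laplacian :: "('a \<Rightarrow> 'a \<Rightarrow> real) \<Rightarrow> ('a \<Rightarrow> complex) \<Rightarrow> ('a \<Rightarrow> complex)" where
  "laplacian b v = (\<lambda>x. \<Sum>y\<in>{y. 0 < b x y}. complex_of_real (b x y) * (v x - v y))"

definition delta :: "'a \<Rightarrow> ('a \<Rightarrow> complex)" where
  "delta x = (\<lambda>y. if y = x then 1 else 0)"

text \<open>Adjoint I* : H_{E_b} \<rightarrow> H_{E_c} of the inclusion I : H_{E_c} \<rightarrow> H_{E_b}
  (normalised representative with value 0 at o0).\<close>

definition incl_adj :: "('a \<Rightarrow> 'a \<Rightarrow> real) \<Rightarrow> ('a \<Rightarrow> 'a \<Rightarrow> real) \<Rightarrow> 'a \<Rightarrow> ('a \<Rightarrow> complex) \<Rightarrow> ('a \<Rightarrow> complex)" where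
  "incl_adj c b o0 f = (THE g. finite_energy c g \<and> g o0 = 0 \<and>
      (\<forall>u. finite_energy c u \<longrightarrow> energy c g u = energy b f u))"

definition lap_dom :: "('a \<Rightarrow> 'a \<Rightarrow> real) \<Rightarrow> ('a \<Rightarrow> 'a \<Rightarrow> real) \<Rightarrow> ('a \<Rightarrow> complex) set" where
  "lap_dom c b = {u. finite_energy c u \<and> finite_energy c (laplacian b u)}"

text \<open>Graph of the adjoint \<Delta>_b^{(c)} w.r.t. the inner product of H_{E_c}:
  (w, z) in the graph iff w, z in H_{E_c} and <z,u>_c = <w, \<Delta>_b u>_c for all u in dom \<Delta>_b.\<close>

definition lap_adj_graph :: "('a \<Rightarrow> 'a \<Rightarrow> real) \<Rightarrow> ('a \<Rightarrow> 'a \<Rightarrow> real) \<Rightarrow> (('a \<Rightarrow> complex) \<times> ('a \<Rightarrow> complex)) set" where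
  "lap_adj_graph c b = {(w, z). finite_energy c w \<and> finite_energy c z \<and>
      (\<forall>u\<in>lap_dom c b. energy c z u = energy c w (laplacian b u))}"

definition lap_adj_dom :: "('a \<Rightarrow> 'a \<Rightarrow> real) \<Rightarrow> ('a \<Rightarrow> 'a \<Rightarrow> real) \<Rightarrow> ('a \<Rightarrow> complex) set" where
  "lap_adj_dom c b = Domain (lap_adj_graph c b)"

definition lin_span :: "('a \<Rightarrow> complex) set \<Rightarrow> ('a \<Rightarrow> complex) set" where
  "lin_span S = {(\<lambda>y. \<Sum>f\<in>F. a f * f y) | F a. finite F \<and> F \<subseteq> S}"

end

theory Submission
  imports Defs
begin


definition tm :: "('a \<Rightarrow> 'a \<Rightarrow> real) \<Rightarrow> ('a \<Rightarrow> complex) \<Rightarrow> ('a \<Rightarrow> complex) \<Rightarrow> 'a \<times> 'a \<Rightarrow> complex" where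
  "tm c u v = (\<lambda>(x, y). complex_of_real (c x y) * (cnj (u x - u y) * (v x - v y)))"

definition qt :: "('a \<Rightarrow> 'a \<Rightarrow> real) \<Rightarrow> ('a \<Rightarrow> complex) \<Rightarrow> 'a \<times> 'a \<Rightarrow> real" where
  "qt c u = (\<lambda>(x, y). c x y * (cmod (u x - u y))\<^sup>2)"

definition Qe :: "('a \<Rightarrow> 'a \<Rightarrow> real) \<Rightarrow> ('a \<Rightarrow> complex) \<Rightarrow> real" where
  "Qe c u = infsum (qt c u) UNIV"

lemma energy_tm: "energy c u v = 1/2 * infsum (tm c u v) UNIV"
  unfolding energy_def tm_def by simp

lemma FE_qt: "finite_energy c u \<longleftrightarrow> qt c u summable_on UNIV"
  unfolding finite_energy_def qt_def by simp

lemma qt_nn: "(\<And>x y. 0 \<le> c x y) \<Longrightarrow> 0 \<le> qt c u p"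
  unfolding qt_def by (cases p) auto

lemma Qe_nn: assumes "\<And>x y. 0 \<le> c x y" shows "0 \<le> Qe c u"
  unfolding Qe_def by (rule infsum_nonneg) (simp add: qt_nn assms)

lemma norm_tm_le: assumes "\<And>x y. 0 \<le> c x y"
  shows "norm (tm c u v p) \<le> qt c u p + qt c v p"
proof (cases p)
  case (Pair x y)
  let ?a = "cmod (u x - u y)" and ?b = "cmod (v x - v y)"
  have "norm (tm c u v p) = c x y * (?a * ?b)"
    using assms by (simp add: tm_def Pair norm_mult del: complex_cnj_diff)
  also have "\<dots> \<le> c x y * (?a\<^sup>2 + ?b\<^sup>2)"
  proof (rule mult_left_mono)
    have "0 \<le> (?a - ?b)\<^sup>2" by simp
    then show "?a * ?b \<le> ?a\<^sup>2 + ?b\<^sup>2"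
      by (simp add: power2_eq_square algebra_simps) (smt (verit) mult_nonneg_nonneg norm_ge_zero)
    show "0 \<le> c x y" using assms by simp
  qed
  also have "\<dots> = qt c u p + qt c v p" by (simp add: qt_def Pair algebra_simps)
  finally show ?thesis .
qed

lemma tm_summable: assumes "\<And>x y. 0 \<le> c x y" "finite_energy c u" "finite_energy c v"
  shows "tm c u v summable_on UNIV"
proof -
  have "(\<lambda>p. norm (tm c u v p)) summable_on UNIV"
    apply (rule summable_on_comparison_test[where f="\<lambda>p. qt c u p + qt c v p"])
    using assms by (auto simp: FE_qt intro: summable_on_add norm_tm_le)
  then show ?thesis using summable_on_iff_abs_summable_on_complex by blast
qed

lemma FE_add: assumes "finite_energy c u" "finite_energy c v" "\<And>x y. 0 \<le> c x y"
  shows "finite_energy c (\<lambda>x. u x + v x)"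
  unfolding FE_qt
proof (rule summable_on_comparison_test[where f="\<lambda>p. 2 * qt c u p + 2 * qt c v p"])
  show "(\<lambda>p. 2 * qt c u p + 2 * qt c v p) summable_on UNIV"
    using assms by (auto simp: FE_qt intro!: summable_on_add summable_on_cmult_right)
  fix p :: "'a \<times> 'a"
  show "0 \<le> qt c (\<lambda>x. u x + v x) p" using assms qt_nn by blast
  obtain x y where p: "p = (x,y)" by fastforce
  have "(cmod (u x + v x - (u y + v y)))\<^sup>2 \<le> 2 * (cmod (u x - u y))\<^sup>2 + 2 * (cmod (v x - v y))\<^sup>2"
  proof -
    have e: "u x + v x - (u y + v y) = (u x - u y) + (v x - v y)" by simp
    have "cmod (u x + v x - (u y + v y)) \<le> cmod (u x - u y) + cmod (v x - v y)"
      unfolding e by (rule norm_triangle_ineq)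
    then have "(cmod (u x + v x - (u y + v y)))\<^sup>2 \<le> (cmod (u x - u y) + cmod (v x - v y))\<^sup>2"
      by (simp add: power_mono)
    also have "\<dots> \<le> 2 * (cmod (u x - u y))\<^sup>2 + 2 * (cmod (v x - v y))\<^sup>2"
    proof -
      have "0 \<le> (cmod (u x - u y) - cmod (v x - v y))\<^sup>2" by simp
      then show ?thesis by (simp add: power2_eq_square algebra_simps)
    qed
    finally show ?thesis .
  qed
  then have "c x y * (cmod (u x + v x - (u y + v y)))\<^sup>2 \<le> c x y * (2 * (cmod (u x - u y))\<^sup>2 + 2 * (cmod (v x - v y))\<^sup>2)"
    using assms(3)[of x y] by (rule mult_left_mono)
  then show "qt c (\<lambda>x. u x + v x) p \<le> 2 * qt c u p + 2 * qt c v p"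
    unfolding qt_def p by (simp add: algebra_simps)
qed

lemma FE_scale: assumes "finite_energy c u"
  shows "finite_energy c (\<lambda>x. a * u x)"
proof -
  have "qt c (\<lambda>x. a * u x) = (\<lambda>p. (cmod a)\<^sup>2 * qt c u p)"
    by (auto simp: qt_def fun_eq_iff right_diff_distrib[symmetric] norm_mult power_mult_distrib)
  then show ?thesis using assms unfolding FE_qt by (auto intro: summable_on_cmult_right)
qed

lemma FE_const: "finite_energy c (\<lambda>x. k)"
  unfolding FE_qt qt_def by (simp add: case_prod_unfold)

lemma FE_diff: assumes "finite_energy c u" "finite_energy c v" "\<And>x y. 0 \<le> c x y"
  shows "finite_energy c (\<lambda>x. u x - v x)"
  using FE_add[OF assms(1) FE_scale[OF assms(2), of "-1"] assms(3)] by simp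

lemma FE_shift: "finite_energy c (\<lambda>x. u x + k) \<longleftrightarrow> finite_energy c u"
  unfolding FE_qt qt_def by simp

lemma E_shift2: "energy c u (\<lambda>x. v x + k) = energy c u v"
  unfolding energy_def by simp

lemma E_shift1: "energy c (\<lambda>x. u x + k) v = energy c u v"
  unfolding energy_def by simp

lemma E_add2: assumes "\<And>x y. 0 \<le> c x y" "finite_energy c u" "finite_energy c v" "finite_energy c w"
  shows "energy c u (\<lambda>x. v x + w x) = energy c u v + energy c u w"
proof -
  have "tm c u (\<lambda>x. v x + w x) = (\<lambda>p. tm c u v p + tm c u w p)"
    by (auto simp: tm_def fun_eq_iff algebra_simps)
  then show ?thesis unfolding energy_tm
    using infsum_add[OF tm_summable[OF assms(1,2,3)] tm_summable[OF assms(1,2,4)]]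
    by (simp add: algebra_simps)
qed

lemma E_scale2: assumes "\<And>x y. 0 \<le> c x y" "finite_energy c u" "finite_energy c v"
  shows "energy c u (\<lambda>x. a * v x) = a * energy c u v"
proof -
  have "tm c u (\<lambda>x. a * v x) = (\<lambda>p. a * tm c u v p)"
    by (auto simp: tm_def fun_eq_iff algebra_simps)
  then show ?thesis unfolding energy_tm
    using infsum_cmult_right[of a "tm c u v" UNIV] tm_summable[OF assms] by simp
qed

lemma E_cnj: "energy c v u = cnj (energy c u v)"
proof -
  have "tm c v u = (\<lambda>p. cnj (tm c u v p))"
    by (auto simp: tm_def fun_eq_iff algebra_simps)
  then show ?thesis unfolding energy_tm by simp
qed

lemma E_add1: assumes "\<And>x y. 0 \<le> c x y" "finite_energy c u" "finite_energy c v" "finite_energy c w"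
  shows "energy c (\<lambda>x. v x + w x) u = energy c v u + energy c w u"
proof -
  have "energy c (\<lambda>x. v x + w x) u = cnj (energy c u (\<lambda>x. v x + w x))" by (rule E_cnj)
  also have "\<dots> = cnj (energy c u v) + cnj (energy c u w)" using E_add2[OF assms] by simp
  also have "\<dots> = energy c v u + energy c w u" using E_cnj[of c v u] E_cnj[of c w u] by simp
  finally show ?thesis .
qed

lemma E_scale1: assumes "\<And>x y. 0 \<le> c x y" "finite_energy c u" "finite_energy c v"
  shows "energy c (\<lambda>x. a * v x) u = cnj a * energy c v u"
proof -
  have "energy c (\<lambda>x. a * v x) u = cnj (energy c u (\<lambda>x. a * v x))" by (rule E_cnj)
  also have "\<dots> = cnj a * cnj (energy c u v)" using E_scale2[OF assms] by simp
  also have "\<dots> = cnj a * energy c v u" using E_cnj[of c v u] by simp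
  finally show ?thesis .
qed

lemma cnj_self: "cnj d * d = complex_of_real ((cmod d)\<^sup>2)"
  by (metis complex_norm_square mult.commute)

lemma E_self: assumes "\<And>x y. 0 \<le> c x y" "finite_energy c u"
  shows "energy c u u = complex_of_real (Qe c u / 2)"
proof -
  have "tm c u u = (\<lambda>p. complex_of_real (qt c u p))"
    by (auto simp: tm_def qt_def fun_eq_iff cnj_self simp del: complex_cnj_diff)
  moreover have "((\<lambda>p. complex_of_real (qt c u p)) has_sum complex_of_real (Qe c u)) UNIV"
    unfolding Qe_def by (rule has_sum_of_real) (use assms in \<open>simp add: FE_qt\<close>)
  ultimately show ?thesis unfolding energy_tm by (simp add: infsumI)
qed

lemma E_scaled_expand:
  assumes c: "\<And>x y. 0 \<le> c x y" and u: "finite_energy c u" and v: "finite_energy c v"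
  shows "energy c (\<lambda>x. u x + b * v x) (\<lambda>x. u x + b * v x) =
    energy c u u + b * energy c u v + cnj b * cnj (energy c u v) + cnj b * b * energy c v v"
proof -
  have bv: "finite_energy c (\<lambda>x. b * v x)" by (rule FE_scale[OF v])
  have w: "finite_energy c (\<lambda>x. u x + b * v x)" by (rule FE_add[OF u bv c])
  have "energy c (\<lambda>x. u x + b * v x) (\<lambda>x. u x + b * v x) =
      energy c u (\<lambda>x. u x + b * v x) + energy c (\<lambda>x. b * v x) (\<lambda>x. u x + b * v x)"
    by (rule E_add1[OF c w u bv])
  also have "energy c u (\<lambda>x. u x + b * v x) = energy c u u + b * energy c u v"
    using E_add2[OF c u u bv] E_scale2[OF c u v] by simp
  also have "energy c (\<lambda>x. b * v x) (\<lambda>x. u x + b * v x) = cnj b * energy c v (\<lambda>x. u x + b * v x)"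
    by (rule E_scale1[OF c w v])
  also have "energy c v (\<lambda>x. u x + b * v x) = energy c v u + b * energy c v v"
    using E_add2[OF c v u bv] E_scale2[OF c v v] by simp
  also have "energy c v u = cnj (energy c u v)" by (rule E_cnj)
  finally show ?thesis by (simp add: algebra_simps)
qed

lemma CS: assumes c: "\<And>x y. 0 \<le> c x y" and u: "finite_energy c u" and v: "finite_energy c v"
  shows "(cmod (energy c u v))\<^sup>2 \<le> (Qe c u / 2) * (Qe c v / 2)"
proof (cases "energy c u v = 0")
  case True
  then show ?thesis using Qe_nn[of c u, OF c] Qe_nn[of c v, OF c] by simp
next
  case False
  define e where "e = energy c u v"
  define A where "A = Qe c u / 2"
  define B where "B = Qe c v / 2"
  have A0: "0 \<le> A" and B0: "0 \<le> B" using Qe_nn[of c u, OF c] Qe_nn[of c v, OF c] by (auto simp: A_def B_def)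
  have ne: "cmod e > 0" using False by (simp add: e_def)
  have key: "0 \<le> A - 2 * t * cmod e + t\<^sup>2 * B" for t :: real
  proof -
    define w where "w = cnj e / complex_of_real (cmod e)"
    define b where "b = - (complex_of_real t * w)"
    have en: "complex_of_real (cmod e) \<noteq> 0" using ne by simp
    have we: "w * e = complex_of_real (cmod e)"
    proof -
      have "w * e = (cnj e * e) / complex_of_real (cmod e)" by (simp add: w_def)
      also have "cnj e * e = complex_of_real (cmod e) * complex_of_real (cmod e)"
        by (simp only: cnj_self of_real_mult power2_eq_square)
      finally show ?thesis using en by simp
    qed
    have ww: "cnj w * w = 1"
    proof -
      have "cnj w * w = (cnj e * e) / (complex_of_real (cmod e) * complex_of_real (cmod e))"
        by (simp add: w_def)
      also have "cnj e * e = complex_of_real (cmod e) * complex_of_real (cmod e)"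
        by (simp only: cnj_self of_real_mult power2_eq_square)
      finally show ?thesis using en by simp
    qed
    have bb: "cnj b * b = complex_of_real (t\<^sup>2)"
    proof -
      have "cnj b * b = complex_of_real t * complex_of_real t * (cnj w * w)"
        by (simp add: b_def)
      then show ?thesis by (simp add: ww power2_eq_square)
    qed
    have be: "b * e = - complex_of_real (t * cmod e)"
    proof -
      have "b * e = - (complex_of_real t * (w * e))" by (simp add: b_def)
      then show ?thesis by (simp add: we)
    qed
    have be': "cnj b * cnj e = - complex_of_real (t * cmod e)"
      using arg_cong[OF be, of cnj] by simp
    have "0 \<le> Qe c (\<lambda>x. u x + b * v x) / 2" using Qe_nn[of c "\<lambda>x. u x + b * v x", OF c] by simp
    also have "complex_of_real (Qe c (\<lambda>x. u x + b * v x) / 2) =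
        energy c u u + b * e + cnj b * cnj e + cnj b * b * energy c v v"
      unfolding e_def
      by (subst E_self[OF c FE_add[OF u FE_scale[OF v, of b] c], symmetric])
        (rule E_scaled_expand[OF c u v])
    then have "Qe c (\<lambda>x. u x + b * v x) / 2 =
        Re (energy c u u + b * e + cnj b * cnj e + cnj b * b * energy c v v)"
      by (metis Re_complex_of_real)
    also have "\<dots> = A - 2 * t * cmod e + t\<^sup>2 * B"
      unfolding bb be be' E_self[OF c u] E_self[OF c v] A_def B_def
      by (simp only: Re_complex_of_real plus_complex.sel minus_complex.sel uminus_complex.sel times_complex.sel Im_complex_of_real)
    finally show ?thesis .
  qed
  have "(cmod e)\<^sup>2 \<le> A * B"
  proof (cases "B = 0")
    case True
    have "0 \<le> A - 2 * ((A + 1) / (2 * cmod e)) * cmod e" using key[of "(A + 1) / (2 * cmod e)"] True by simp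
    then show ?thesis using ne by simp
  next
    case False
    then have Bp: "B > 0" using B0 by simp
    have "0 \<le> A - 2 * (cmod e / B) * cmod e + (cmod e / B)\<^sup>2 * B" by (rule key)
    also have "\<dots> = A - (cmod e)\<^sup>2 / B" using Bp by (simp add: field_simps power2_eq_square)
    finally show ?thesis using Bp by (simp add: field_simps)
  qed
  then show ?thesis by (simp add: e_def A_def B_def)
qed

lemma edge_le: assumes c: "\<And>x y. 0 \<le> c x y" and u: "finite_energy c u"
  shows "c x y * (cmod (u x - u y))\<^sup>2 \<le> Qe c u"
proof -
  have "sum (qt c u) {(x,y)} \<le> infsum (qt c u) UNIV"
    by (rule finite_sum_le_infsum) (use u qt_nn[of c u, OF c] in \<open>auto simp: FE_qt\<close>)
  then show ?thesis by (simp add: Qe_def qt_def)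
qed

lemma point_bound:
  assumes c: "\<And>x y. 0 \<le> c x y" and conn: "net_connected c"
  shows "\<exists>K\<ge>0. \<forall>u. finite_energy c u \<longrightarrow> cmod (u x - u o0) \<le> K * sqrt (Qe c u)"
proof -
  have "(o0, x) \<in> {(p, q). 0 < c p q}\<^sup>*" using conn by (simp add: net_connected_def)
  then show ?thesis
  proof (induction rule: rtrancl_induct)
    case base
    then show ?case by (rule exI[of _ 0]) simp
  next
    case (step y z)
    then obtain K where K: "K \<ge> 0" "\<And>u. finite_energy c u \<Longrightarrow> cmod (u y - u o0) \<le> K * sqrt (Qe c u)"
      by blast
    have cyz: "c y z > 0" using step by simp
    show ?case
    proof (rule exI[of _ "K + 1 / sqrt (c y z)"], intro conjI allI impI)
      show "0 \<le> K + 1 / sqrt (c y z)" using K cyz by simp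
      fix u assume u: "finite_energy c u"
      have "(cmod (u y - u z))\<^sup>2 \<le> Qe c u / c y z"
        using edge_le[OF c u, of y z] cyz by (simp add: field_simps mult.commute)
      then have "cmod (u y - u z) \<le> sqrt (Qe c u / c y z)"
        by (simp add: real_le_rsqrt)
      also have "\<dots> = sqrt (Qe c u) / sqrt (c y z)" by (simp add: real_sqrt_divide)
      finally have e1: "cmod (u z - u y) \<le> sqrt (Qe c u) / sqrt (c y z)" by (simp add: norm_minus_commute)
      have "cmod (u z - u o0) \<le> cmod (u z - u y) + cmod (u y - u o0)"
        using norm_triangle_ineq[of "u z - u y" "u y - u o0"] by simp
      also have "\<dots> \<le> sqrt (Qe c u) / sqrt (c y z) + K * sqrt (Qe c u)" using e1 K(2)[OF u] by simp
      also have "\<dots> = (K + 1 / sqrt (c y z)) * sqrt (Qe c u)" by (simp add: field_simps)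
      finally show "cmod (u z - u o0) \<le> (K + 1 / sqrt (c y z)) * sqrt (Qe c u)" .
    qed
  qed
qed

lemma pb_diff:
  assumes c: "\<And>x y. 0 \<le> c x y" and conn: "net_connected c"
  shows "\<exists>K\<ge>0. \<forall>u. finite_energy c u \<longrightarrow> u o0 = 0 \<longrightarrow> cmod (u x) \<le> K * sqrt (Qe c u)"
proof -
  have "\<exists>K\<ge>0. \<forall>u. finite_energy c u \<longrightarrow> cmod (u x - u o0) \<le> K * sqrt (Qe c u)"
    by (rule point_bound[OF c conn])
  then show ?thesis by (metis diff_zero)
qed

lemma completeness:
  fixes g :: "nat \<Rightarrow> 'a \<Rightarrow> complex"
  assumes c: "\<And>x y. 0 \<le> c x y" and conn: "net_connected c"
    and fe: "\<And>n. finite_energy c (g n)" and g0: "\<And>n. g n o0 = 0"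
    and cau: "\<And>\<epsilon>. \<epsilon> > 0 \<Longrightarrow> \<exists>N. \<forall>n\<ge>N. \<forall>m\<ge>N. Qe c (\<lambda>x. g n x - g m x) \<le> \<epsilon>"
  shows "\<exists>h. finite_energy c h \<and> h o0 = 0 \<and>
     (\<forall>\<epsilon>>0. \<exists>N. \<forall>n\<ge>N. Qe c (\<lambda>x. g n x - h x) \<le> \<epsilon>)"
proof -
  have conv: "convergent (\<lambda>n. g n x)" for x
  proof -
    obtain K where K: "K \<ge> 0" "\<And>u. finite_energy c u \<Longrightarrow> u o0 = 0 \<Longrightarrow> cmod (u x) \<le> K * sqrt (Qe c u)"
    proof -
      have "\<exists>K\<ge>0. \<forall>u. finite_energy c u \<longrightarrow> u o0 = 0 \<longrightarrow> cmod (u x) \<le> K * sqrt (Qe c u)"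
        by (rule pb_diff[OF c conn])
      then show ?thesis using that by blast
    qed
    have "Cauchy (\<lambda>n. g n x)"
    proof (rule metric_CauchyI)
      fix e :: real assume e: "e > 0"
      define eps where "eps = (e / (K + 1))\<^sup>2"
      have eps: "eps > 0" using e K by (simp add: eps_def)
      obtain N where N: "\<And>n m. n \<ge> N \<Longrightarrow> m \<ge> N \<Longrightarrow> Qe c (\<lambda>x. g n x - g m x) \<le> eps"
        using cau[OF eps] by blast
      show "\<exists>M. \<forall>m\<ge>M. \<forall>n\<ge>M. dist (g m x) (g n x) < e"
      proof (intro exI allI impI)
        fix m n assume mn: "N \<le> m" "N \<le> n"
        have "cmod (g m x - g n x) \<le> K * sqrt (Qe c (\<lambda>x. g m x - g n x))"
          using K(2)[of "\<lambda>x. g m x - g n x"] FE_diff[OF fe fe c] g0 by simp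
        also have "\<dots> \<le> K * sqrt eps"
          using N[OF mn] K by (simp add: mult_left_mono)
        also have "sqrt eps = e / (K + 1)" using e K by (simp add: eps_def)
        also have "K * (e / (K + 1)) < e" using e K by (simp add: field_simps)
        finally show "dist (g m x) (g n x) < e" by (simp add: dist_norm)
      qed
    qed
    then show ?thesis by (simp add: Cauchy_convergent_iff)
  qed
  define h where "h x = lim (\<lambda>n. g n x)" for x
  have lim: "(\<lambda>n. g n x) \<longlonglongrightarrow> h x" for x
    using conv[of x] by (simp add: h_def convergent_LIMSEQ_iff)
  have h0: "h o0 = 0" using lim[of o0] g0 by (simp add: LIMSEQ_const_iff)
  have main: "finite_energy c (\<lambda>x. g n x - h x) \<and> Qe c (\<lambda>x. g n x - h x) \<le> \<epsilon>"
    if N: "\<And>n m. n \<ge> N \<Longrightarrow> m \<ge> N \<Longrightarrow> Qe c (\<lambda>x. g n x - g m x) \<le> \<epsilon>" and n: "n \<ge> N" for n N \<epsilon>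
  proof -
    have fin: "sum (qt c (\<lambda>x. g n x - h x)) F \<le> \<epsilon>" if F: "finite F" for F
    proof -
      have "(\<lambda>m. sum (qt c (\<lambda>x. g n x - g m x)) F) \<longlonglongrightarrow> sum (qt c (\<lambda>x. g n x - h x)) F"
        unfolding qt_def
        by (intro tendsto_sum) (auto simp: case_prod_unfold intro!: tendsto_intros lim)
      moreover have "\<forall>\<^sub>F m in sequentially. sum (qt c (\<lambda>x. g n x - g m x)) F \<le> \<epsilon>"
        unfolding eventually_sequentially
      proof (intro exI allI impI)
        fix m assume m: "m \<ge> N"
        have "sum (qt c (\<lambda>x. g n x - g m x)) F \<le> Qe c (\<lambda>x. g n x - g m x)"
          unfolding Qe_def
          by (rule finite_sum_le_infsum) (use F FE_diff[OF fe fe c] qt_nn[OF c] in \<open>auto simp: FE_qt\<close>)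
        also have "\<dots> \<le> \<epsilon>" using N[OF n m] .
        finally show "sum (qt c (\<lambda>x. g n x - g m x)) F \<le> \<epsilon>" .
      qed
      ultimately show ?thesis by (rule tendsto_upperbound) simp
    qed
    have sm: "qt c (\<lambda>x. g n x - h x) summable_on UNIV"
      by (rule nonneg_bdd_above_summable_on) (use fin qt_nn[OF c] in \<open>auto intro!: bdd_aboveI\<close>)
    moreover have "Qe c (\<lambda>x. g n x - h x) \<le> \<epsilon>"
      unfolding Qe_def by (rule infsum_le_finite_sums[OF sm]) (use fin in auto)
    ultimately show ?thesis by (simp add: FE_qt)
  qed
  show ?thesis
  proof (rule exI[of _ h], intro conjI allI impI)
    obtain N where N: "\<And>n m. n \<ge> N \<Longrightarrow> m \<ge> N \<Longrightarrow> Qe c (\<lambda>x. g n x - g m x) \<le> 1"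
      using cau[of 1] by auto
    have m: "finite_energy c (\<lambda>x. g N x - h x)" using main[OF N order_refl] by blast
    have "finite_energy c (\<lambda>x. g N x - (g N x - h x))" by (rule FE_diff[OF fe m c])
    then show "finite_energy c h" by simp
    show "h o0 = 0" by (rule h0)
    fix \<epsilon> :: real assume e: "\<epsilon> > 0"
    obtain N where N: "\<And>n m. n \<ge> N \<Longrightarrow> m \<ge> N \<Longrightarrow> Qe c (\<lambda>x. g n x - g m x) \<le> \<epsilon>"
      using cau[OF e] by auto
    show "\<exists>N. \<forall>n\<ge>N. Qe c (\<lambda>x. g n x - h x) \<le> \<epsilon>"
      using main[OF N] by blast
  qed
qed

lemma Qe_E: assumes c: "\<And>x y. 0 \<le> c x y" and u: "finite_energy c u"
  shows "Qe c u = 2 * Re (energy c u u)"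
  using arg_cong[OF E_self[OF c u], of Re] by simp

lemma Qe_const: "Qe c (\<lambda>x. k) = 0"
  unfolding Qe_def qt_def by (simp add: case_prod_unfold)

lemma Qe_scale: assumes u: "finite_energy c u"
  shows "Qe c (\<lambda>x. a * u x) = (cmod a)\<^sup>2 * Qe c u"
proof -
  have "qt c (\<lambda>x. a * u x) = (\<lambda>p. (cmod a)\<^sup>2 * qt c u p)"
    by (auto simp: qt_def fun_eq_iff right_diff_distrib[symmetric] norm_mult power_mult_distrib)
  then show ?thesis unfolding Qe_def using infsum_cmult_right[of "(cmod a)\<^sup>2" "qt c u" UNIV] u
    by (simp add: FE_qt)
qed

lemma E_diff1: assumes c: "\<And>x y. 0 \<le> c x y" and u: "finite_energy c u"
    and p: "finite_energy c p" and q: "finite_energy c q"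
  shows "energy c (\<lambda>x. p x - q x) u = energy c p u - energy c q u"
proof -
  have "energy c (\<lambda>x. p x + (-1) * q x) u = energy c p u + energy c (\<lambda>x. (-1) * q x) u"
    by (rule E_add1[OF c u p FE_scale[OF q]])
  also have "energy c (\<lambda>x. (-1) * q x) u = cnj (-1) * energy c q u" by (rule E_scale1[OF c u q])
  finally show ?thesis by simp
qed

lemma par_law: assumes c: "\<And>x y. 0 \<le> c x y" and p: "finite_energy c p" and q: "finite_energy c q"
  shows "Qe c (\<lambda>x. p x - q x) + Qe c (\<lambda>x. p x + q x) = 2 * Qe c p + 2 * Qe c q"
proof -
  have f: "(\<lambda>x. p x + (-1) * q x) = (\<lambda>x. p x - q x)" by simp
  have m: "Qe c (\<lambda>x. p x - q x) = 2 * Re (energy c p p + (-1) * energy c p q + cnj (-1) * cnj (energy c p q) + cnj (-1) * (-1) * energy c q q)"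
    using Qe_E[OF c FE_diff[OF p q c]] E_scaled_expand[OF c p q, of "-1", unfolded f] by simp
  have pl: "Qe c (\<lambda>x. p x + q x) = 2 * Re (energy c p p + energy c p q + cnj (energy c p q) + energy c q q)"
    using Qe_E[OF c FE_add[OF p q c]] E_scaled_expand[OF c p q, of "1"] by simp
  show ?thesis using m pl Qe_E[OF c p] Qe_E[OF c q] by simp
qed

lemma quad_zero: fixes R Q :: real assumes Q: "Q \<ge> 0" and h: "\<And>t. 0 \<le> 2 * t * R + t\<^sup>2 * Q"
  shows "R = 0"
proof (rule ccontr)
  assume R: "R \<noteq> 0"
  define t where "t = - R / (Q + 1)"
  have tq: "t * (Q + 1) = - R" using Q by (simp add: t_def)
  have "(Q + 1)\<^sup>2 * (2 * t * R + t\<^sup>2 * Q) = 2 * (t * (Q + 1)) * R * (Q + 1) + (t * (Q + 1))\<^sup>2 * Q"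
    by (simp add: algebra_simps power2_eq_square)
  also have "\<dots> = - (R\<^sup>2 * (Q + 2))" unfolding tq by (simp add: algebra_simps power2_eq_square)
  also have "\<dots> < 0" using R Q by simp
  finally have "(Q + 1)\<^sup>2 * (2 * t * R + t\<^sup>2 * Q) < 0" .
  moreover have "0 \<le> (Q + 1)\<^sup>2 * (2 * t * R + t\<^sup>2 * Q)" using h[of t] by simp
  finally show False by simp
qed



lemma riesz:
  fixes \<phi> :: "('a \<Rightarrow> complex) \<Rightarrow> complex"
  assumes c: "\<And>x y. 0 \<le> c x y" and conn: "net_connected c"
    and add: "\<And>u v. finite_energy c u \<Longrightarrow> finite_energy c v \<Longrightarrow> \<phi> (\<lambda>x. u x + v x) = \<phi> u + \<phi> v"
    and scl: "\<And>a u. finite_energy c u \<Longrightarrow> \<phi> (\<lambda>x. a * u x) = a * \<phi> u"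
    and K: "K \<ge> 0" and bnd: "\<And>u. finite_energy c u \<Longrightarrow> cmod (\<phi> u) \<le> K * sqrt (Qe c u)"
  shows "\<exists>g. finite_energy c g \<and> g o0 = 0 \<and> (\<forall>u. finite_energy c u \<longrightarrow> energy c g u = \<phi> u)"
proof -
  define V where "V = {g. finite_energy c g \<and> g o0 = 0}"
  define J where "J g = Qe c g / 2 - 2 * Re (\<phi> g)" for g
  define m where "m = Inf (J ` V)"
  have Jlow: "- 2 * K\<^sup>2 \<le> J g" if g: "g \<in> V" for g
  proof -
    define x where "x = sqrt (Qe c g)"
    have Q: "Qe c g = x\<^sup>2" using Qe_nn[of c g, OF c] by (simp add: x_def)
    have "Re (\<phi> g) \<le> K * x" using bnd[of g] g complex_Re_le_cmod[of "\<phi> g"] by (simp add: V_def x_def)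
    moreover have "0 \<le> (x - 2 * K)\<^sup>2 / 2" by simp
    ultimately show ?thesis unfolding J_def Q by (simp add: power2_eq_square algebra_simps)
  qed
  have bdd: "bdd_below (J ` V)" using Jlow by (auto intro!: bdd_belowI2)
  have zV: "(\<lambda>x. 0) \<in> V" using FE_const[of c 0] by (simp add: V_def)
  have ne: "J ` V \<noteq> {}" using zV by auto
  have mle: "m \<le> J g" if "g \<in> V" for g
    unfolding m_def by (rule cInf_lower) (use that bdd in auto)
  have "\<forall>n. \<exists>g\<in>V. J g < m + 1 / real (Suc n)"
  proof
    fix n
    have "Inf (J ` V) < m + 1 / real (Suc n)" by (simp add: m_def)
    then obtain y where "y \<in> J ` V" "y < m + 1 / real (Suc n)" using cInf_lessD[OF ne] by blast
    then show "\<exists>g\<in>V. J g < m + 1 / real (Suc n)" by auto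
  qed
  then obtain G where G: "\<And>n. G n \<in> V" "\<And>n. J (G n) < m + 1 / real (Suc n)"
    by metis
  have GFE: "finite_energy c (G n)" and G0: "G n o0 = 0" for n using G(1)[of n] by (auto simp: V_def)
  have para: "Qe c (\<lambda>x. p x - q x) \<le> 4 * (J p - m) + 4 * (J q - m)" if p: "p \<in> V" and q: "q \<in> V" for p q
  proof -
    have pf: "finite_energy c p" and qf: "finite_energy c q" using p q by (auto simp: V_def)
    have pqf: "finite_energy c (\<lambda>x. p x + q x)" by (rule FE_add[OF pf qf c])
    define h where "h = (\<lambda>x. (1/2) * (p x + q x))"
    have hV: "h \<in> V" using p q FE_scale[OF pqf, of "1/2"] by (simp add: V_def h_def)
    have Qh: "Qe c h = Qe c (\<lambda>x. p x + q x) / 4"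
      unfolding h_def Qe_scale[OF pqf] by (simp add: power2_eq_square)
    have ph: "\<phi> h = (\<phi> p + \<phi> q) / 2"
      unfolding h_def scl[OF pqf] add[OF pf qf] by simp
    have "m \<le> J h" by (rule mle[OF hV])
    then have "m \<le> Qe c (\<lambda>x. p x + q x) / 8 - Re (\<phi> p) - Re (\<phi> q)"
      unfolding J_def Qh ph by (simp add: add_divide_distrib)
    moreover have "Qe c (\<lambda>x. p x - q x) + Qe c (\<lambda>x. p x + q x) = 2 * Qe c p + 2 * Qe c q"
      by (rule par_law[OF c pf qf])
    ultimately show ?thesis unfolding J_def by simp
  qed
  have cau: "\<exists>N. \<forall>n\<ge>N. \<forall>k\<ge>N. Qe c (\<lambda>x. G n x - G k x) \<le> \<epsilon>" if e: "\<epsilon> > 0" for \<epsilon>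
  proof -
    obtain N :: nat where N: "8 / \<epsilon> < real N" using reals_Archimedean2 by blast
    have N': "8 / real (Suc N) \<le> \<epsilon>"
    proof -
      have "8 / \<epsilon> < real (Suc N)" using N by simp
      then show ?thesis using e by (simp add: field_simps)
    qed
    have Jn: "J (G n) - m \<le> 1 / real (Suc N)" if "n \<ge> N" for n
    proof -
      have "1 / real (Suc n) \<le> 1 / real (Suc N)" using that by (simp add: frac_le)
      then show ?thesis using G(2)[of n] by simp
    qed
    show ?thesis
    proof (intro exI allI impI)
      fix n k assume n: "N \<le> n" and k: "N \<le> k"
      have "Qe c (\<lambda>x. G n x - G k x) \<le> 4 * (J (G n) - m) + 4 * (J (G k) - m)" by (rule para[OF G(1) G(1)])
      also have "\<dots> \<le> 8 / real (Suc N)" using Jn[OF n] Jn[OF k] by simp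
      finally show "Qe c (\<lambda>x. G n x - G k x) \<le> \<epsilon>" using N' by simp
    qed
  qed
  obtain g where gf: "finite_energy c g" and g0: "g o0 = 0"
    and gconv: "\<And>\<epsilon>. \<epsilon> > 0 \<Longrightarrow> \<exists>N. \<forall>n\<ge>N. Qe c (\<lambda>x. G n x - g x) \<le> \<epsilon>"
    using completeness[OF c conn GFE G0 cau] by blast
  have Qlim: "(\<lambda>n. Qe c (\<lambda>x. G n x - g x)) \<longlonglongrightarrow> 0"
  proof (rule LIMSEQ_I)
    fix r :: real assume r: "0 < r"
    obtain N where N: "\<And>n. n \<ge> N \<Longrightarrow> Qe c (\<lambda>x. G n x - g x) \<le> r / 2" using gconv[of "r/2"] r by auto
    show "\<exists>no. \<forall>n\<ge>no. norm (Qe c (\<lambda>x. G n x - g x) - 0) < r"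
    proof (intro exI[of _ N] allI impI)
      fix n assume n: "N \<le> n"
      have "0 \<le> Qe c (\<lambda>x. G n x - g x)" by (rule Qe_nn[of c, OF c])
      then show "norm (Qe c (\<lambda>x. G n x - g x) - 0) < r" using N[OF n] r by simp
    qed
  qed
  have Elim: "(\<lambda>n. energy c (G n) u) \<longlonglongrightarrow> energy c g u" if uf: "finite_energy c u" for u
  proof -
    have "(\<lambda>n. energy c (G n) u - energy c g u) \<longlonglongrightarrow> 0"
    proof (rule Lim_null_comparison)
      show "\<forall>\<^sub>F n in sequentially. norm (energy c (G n) u - energy c g u) \<le> sqrt (Qe c (\<lambda>x. G n x - g x) / 2 * (Qe c u / 2))"
      proof (rule always_eventually, rule allI)
        fix n
        have "energy c (G n) u - energy c g u = energy c (\<lambda>x. G n x - g x) u"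
          by (rule E_diff1[OF c uf GFE gf, symmetric])
        moreover have "(cmod (energy c (\<lambda>x. G n x - g x) u))\<^sup>2 \<le> Qe c (\<lambda>x. G n x - g x) / 2 * (Qe c u / 2)"
          by (rule CS[OF c FE_diff[OF GFE gf c] uf])
        ultimately show "norm (energy c (G n) u - energy c g u) \<le> sqrt (Qe c (\<lambda>x. G n x - g x) / 2 * (Qe c u / 2))"
          by (simp add: real_le_rsqrt)
      qed
      show "(\<lambda>n. sqrt (Qe c (\<lambda>x. G n x - g x) / 2 * (Qe c u / 2))) \<longlonglongrightarrow> 0"
        using tendsto_real_sqrt[OF tendsto_mult[OF tendsto_divide[OF Qlim tendsto_const] tendsto_const]]
        by simp
    qed
    then show ?thesis by (simp add: Lim_null[symmetric])
  qed
  have var: "Re (energy c g u - \<phi> u) = 0" if uV: "u \<in> V" for u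
  proof -
    have uf: "finite_energy c u" using uV by (simp add: V_def)
    have "0 \<le> 2 * t * Re (energy c g u - \<phi> u) + t\<^sup>2 * (Qe c u / 2)" for t :: real
    proof -
      define a where "a n = 2 * t * Re (energy c (G n) u) + t\<^sup>2 * (Qe c u / 2) - 2 * t * Re (\<phi> u)" for n
      have an: "- inverse (real (Suc n)) \<le> a n" for n
      proof -
        define w where "w = (\<lambda>x. G n x + complex_of_real t * u x)"
        have wf: "finite_energy c w" unfolding w_def by (rule FE_add[OF GFE FE_scale[OF uf] c])
        have wV: "w \<in> V" using wf G0[of n] uV by (simp add: V_def w_def)
        have "Qe c w = 2 * Re (energy c w w)" by (rule Qe_E[OF c wf])
        also have "energy c w w = energy c (G n) (G n) + complex_of_real t * energy c (G n) u
            + complex_of_real t * cnj (energy c (G n) u) + complex_of_real t * complex_of_real t * energy c u u"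
          unfolding w_def using E_scaled_expand[OF c GFE[of n] uf, of "complex_of_real t"] by simp
        finally have Qw: "Qe c w = Qe c (G n) + 4 * t * Re (energy c (G n) u) + t\<^sup>2 * Qe c u"
          using Qe_E[OF c GFE[of n]] Qe_E[OF c uf] by (simp add: power2_eq_square algebra_simps)
        have pw: "\<phi> w = \<phi> (G n) + complex_of_real t * \<phi> u"
          unfolding w_def add[OF GFE FE_scale[OF uf]] scl[OF uf] ..
        have "J w - J (G n) = a n" unfolding J_def Qw pw a_def by (simp add: algebra_simps)
        moreover have "m \<le> J w" by (rule mle[OF wV])
        moreover have "J (G n) < m + 1 / real (Suc n)" by (rule G(2))
        ultimately show ?thesis by (simp add: divide_inverse)
      qed
      have alim: "a \<longlonglongrightarrow> 2 * t * Re (energy c g u) + t\<^sup>2 * (Qe c u / 2) - 2 * t * Re (\<phi> u)"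
        unfolding a_def by (intro tendsto_intros Elim[OF uf])
      have "0 \<le> 2 * t * Re (energy c g u) + t\<^sup>2 * (Qe c u / 2) - 2 * t * Re (\<phi> u)"
        using LIMSEQ_le[OF tendsto_minus[OF LIMSEQ_inverse_real_of_nat] alim] an by simp
      then show ?thesis by (simp add: algebra_simps)
    qed
    then show ?thesis by (rule quad_zero[rotated]) (use Qe_nn[of c u, OF c] in simp)
  qed
  have eqV: "energy c g u = \<phi> u" if uV: "u \<in> V" for u
  proof -
    have uf: "finite_energy c u" using uV by (simp add: V_def)
    have iV: "(\<lambda>x. \<i> * u x) \<in> V" using uV FE_scale[OF uf, of "\<i>"] by (simp add: V_def)
    have "Re (energy c g (\<lambda>x. \<i> * u x) - \<phi> (\<lambda>x. \<i> * u x)) = 0" by (rule var[OF iV])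
    then have "Re (\<i> * (energy c g u - \<phi> u)) = 0"
      unfolding E_scale2[OF c gf uf] scl[OF uf] by (simp add: algebra_simps)
    then have "Im (energy c g u - \<phi> u) = 0" by simp
    moreover have "Re (energy c g u - \<phi> u) = 0" by (rule var[OF uV])
    ultimately show ?thesis by (simp add: complex_eq_iff)
  qed
  show ?thesis
  proof (intro exI conjI allI impI)
    show "finite_energy c g" "g o0 = 0" by (fact gf, fact g0)
    fix u assume uf: "finite_energy c u"
    define u' where "u' = (\<lambda>x. u x + (- u o0))"
    have u'f: "finite_energy c u'" unfolding u'_def FE_shift by (rule uf)
    have u'V: "u' \<in> V" using u'f by (simp add: V_def u'_def)
    have "cmod (\<phi> (\<lambda>x. - u o0)) \<le> K * sqrt (Qe c (\<lambda>x. - u o0))" by (rule bnd[OF FE_const])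
    then have p0: "\<phi> (\<lambda>x. - u o0) = 0" by (simp add: Qe_const)
    have "\<phi> u' = \<phi> u" unfolding u'_def add[OF uf FE_const] p0 by simp
    moreover have "energy c g u' = energy c g u" unfolding u'_def by (rule E_shift2)
    ultimately show "energy c g u = \<phi> u" using eqV[OF u'V] by simp
  qed
qed



lemma cond_nn: "conductance c \<Longrightarrow> 0 \<le> c x y"
  by (simp add: conductance_def)

lemma E_const1: "energy c (\<lambda>y. k) u = 0"
  unfolding energy_def by (simp add: case_prod_unfold)

lemma uniq:
  assumes c: "\<And>x y. 0 \<le> c x y" and conn: "net_connected c"
    and g1: "finite_energy c g1" "g1 o0 = 0" and g2: "finite_energy c g2" "g2 o0 = 0"
    and eq: "\<And>u. finite_energy c u \<Longrightarrow> energy c g1 u = energy c g2 u"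
  shows "g1 = g2"
proof
  fix x
  define d where "d = (\<lambda>x. g1 x - g2 x)"
  have df: "finite_energy c d" unfolding d_def by (rule FE_diff[OF g1(1) g2(1) c])
  have "energy c d d = energy c g1 d - energy c g2 d" unfolding d_def
    by (rule E_diff1[OF c FE_diff[OF g1(1) g2(1) c] g1(1) g2(1)])
  then have "energy c d d = 0" using eq[OF df] by simp
  then have Q: "Qe c d = 0" using Qe_E[OF c df] by simp
  have "\<exists>K\<ge>0. \<forall>u. finite_energy c u \<longrightarrow> cmod (u x - u o0) \<le> K * sqrt (Qe c u)"
    by (rule point_bound[OF c conn])
  then obtain K where "cmod (d x - d o0) \<le> K * sqrt (Qe c d)" using df by blast
  then have "d x = d o0" using Q by simp
  then show "g1 x = g2 x" using g1 g2 by (simp add: d_def)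
qed

lemma the_riesz:
  assumes c: "\<And>x y. 0 \<le> c x y" and conn: "net_connected c"
    and ex: "\<exists>g. finite_energy c g \<and> g o0 = 0 \<and> (\<forall>u. finite_energy c u \<longrightarrow> energy c g u = \<phi> u)"
  shows "finite_energy c (THE g. finite_energy c g \<and> g o0 = 0 \<and> (\<forall>u. finite_energy c u \<longrightarrow> energy c g u = \<phi> u))
    \<and> (THE g. finite_energy c g \<and> g o0 = 0 \<and> (\<forall>u. finite_energy c u \<longrightarrow> energy c g u = \<phi> u)) o0 = 0
    \<and> (\<forall>u. finite_energy c u \<longrightarrow> energy c (THE g. finite_energy c g \<and> g o0 = 0 \<and> (\<forall>u. finite_energy c u \<longrightarrow> energy c g u = \<phi> u)) u = \<phi> u)"
proof -
  have ex1: "\<exists>!g. finite_energy c g \<and> g o0 = 0 \<and> (\<forall>u. finite_energy c u \<longrightarrow> energy c g u = \<phi> u)"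
  proof (rule ex_ex1I[OF ex])
    fix g1 g2 assume "finite_energy c g1 \<and> g1 o0 = 0 \<and> (\<forall>u. finite_energy c u \<longrightarrow> energy c g1 u = \<phi> u)"
      "finite_energy c g2 \<and> g2 o0 = 0 \<and> (\<forall>u. finite_energy c u \<longrightarrow> energy c g2 u = \<phi> u)"
    then show "g1 = g2" by (intro uniq[OF c conn]) auto
  qed
  show ?thesis using theI'[OF ex1] by blast
qed

lemma reprod_prop:
  assumes c: "\<And>x y. 0 \<le> c x y" and conn: "net_connected c"
  shows "finite_energy c (reprod c o0 x) \<and> reprod c o0 x o0 = 0 \<and>
    (\<forall>u. finite_energy c u \<longrightarrow> energy c (reprod c o0 x) u = u x - u o0)"
proof -
  have "\<exists>K\<ge>0. \<forall>u. finite_energy c u \<longrightarrow> cmod (u x - u o0) \<le> K * sqrt (Qe c u)"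
    by (rule point_bound[OF c conn])
  then obtain K where K: "K \<ge> 0" "\<And>u. finite_energy c u \<Longrightarrow> cmod (u x - u o0) \<le> K * sqrt (Qe c u)" by blast
  have "\<exists>g. finite_energy c g \<and> g o0 = 0 \<and> (\<forall>u. finite_energy c u \<longrightarrow> energy c g u = u x - u o0)"
    by (rule riesz[OF c conn _ _ K]) (auto simp: algebra_simps)
  from the_riesz[OF c conn this] show ?thesis unfolding reprod_def .
qed

lemma FE_mono: assumes b: "\<And>x y. 0 \<le> b x y" and bc: "\<And>x y. b x y \<le> c x y" and u: "finite_energy c u"
  shows "finite_energy b u" and "Qe b u \<le> Qe c u"
proof -
  have le: "qt b u p \<le> qt c u p" for p
    unfolding qt_def using bc by (cases p) (auto intro: mult_right_mono)
  show fb: "finite_energy b u" unfolding FE_qt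
    by (rule summable_on_comparison_test[of "qt c u"]) (use u le qt_nn[of b, OF b] in \<open>auto simp: FE_qt\<close>)
  show "Qe b u \<le> Qe c u" unfolding Qe_def
    by (rule infsum_mono) (use u fb le in \<open>auto simp: FE_qt\<close>)
qed

lemma delta_props:
  assumes b: "conductance b" and lf: "locally_finite b"
  shows "finite_energy b (delta x)" and "energy b (delta x) u = laplacian b u x"
proof -
  define N where "N = {y. 0 < b x y}"
  have Nf: "finite N" using lf by (simp add: locally_finite_def N_def)
  have bnn: "0 \<le> b p q" for p q using b by (simp add: conductance_def)
  have bsym: "b p q = b q p" for p q using b by (simp add: conductance_def)
  have bxx: "b x x = 0" using b by (simp add: conductance_def)
  have xN: "x \<notin> N" using bxx by (simp add: N_def)
  define S where "S = (\<lambda>z. (x, z)) ` N \<union> (\<lambda>y. (y, x)) ` N"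
  have Sf: "finite S" using Nf by (simp add: S_def)
  have inS: "p \<in> S" if "b (fst p) (snd p) \<noteq> 0" and "fst p = x \<or> snd p = x" for p
  proof (cases p)
    case (Pair p1 p2)
    have pos: "0 < b p1 p2" using that bnn[of p1 p2] Pair by simp
    show ?thesis
    proof (cases "p1 = x")
      case True
      then show ?thesis using pos by (auto simp: S_def N_def Pair)
    next
      case False
      then have "p2 = x" using that Pair by simp
      then show ?thesis using pos bsym[of p1 p2] by (auto simp: S_def N_def Pair image_iff)
    qed
  qed
  have tm0: "tm b (delta x) u p = 0" if "p \<notin> S" for p
    using inS[of p] that by (cases p) (auto simp: tm_def delta_def)
  have qt0: "qt b (delta x) p = 0" if "p \<notin> S" for p
    using inS[of p] that by (cases p) (auto simp: qt_def delta_def)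
  show "finite_energy b (delta x)" unfolding FE_qt
    by (rule finite_nonzero_values_imp_summable_on, rule finite_subset[OF _ Sf]) (use qt0 in auto)
  have "infsum (tm b (delta x) u) UNIV = infsum (tm b (delta x) u) S"
    by (rule infsum_cong_neutral) (use tm0 in auto)
  also have "\<dots> = sum (tm b (delta x) u) S" using Sf by simp
  also have "\<dots> = sum (tm b (delta x) u) ((\<lambda>z. (x, z)) ` N) + sum (tm b (delta x) u) ((\<lambda>y. (y, x)) ` N)"
    unfolding S_def by (rule sum.union_disjoint) (use Nf xN in auto)
  also have "sum (tm b (delta x) u) ((\<lambda>z. (x, z)) ` N) = laplacian b u x"
    unfolding laplacian_def N_def[symmetric]
    by (subst sum.reindex) (use xN in \<open>auto simp: inj_on_def tm_def delta_def intro!: sum.cong\<close>)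
  also have "sum (tm b (delta x) u) ((\<lambda>y. (y, x)) ` N) = laplacian b u x"
    unfolding laplacian_def N_def[symmetric]
    by (subst sum.reindex) (use xN bsym in \<open>auto simp: inj_on_def tm_def delta_def algebra_simps intro!: sum.cong\<close>)
  finally show "energy b (delta x) u = laplacian b u x" unfolding energy_tm by simp
qed

lemma incl_prop:
  assumes bcd: "conductance b" and ccd: "conductance c" and bc: "\<And>x y. b x y \<le> c x y"
    and lfb: "locally_finite b" and conn: "net_connected c"
  shows "finite_energy c (incl_adj c b o0 (\<lambda>y. delta x y - delta o0 y)) \<and>
    incl_adj c b o0 (\<lambda>y. delta x y - delta o0 y) o0 = 0 \<and>
    (\<forall>u. finite_energy c u \<longrightarrow> energy c (incl_adj c b o0 (\<lambda>y. delta x y - delta o0 y)) u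
       = energy b (\<lambda>y. delta x y - delta o0 y) u)"
proof -
  have c: "\<And>x y. 0 \<le> c x y" and b: "\<And>x y. 0 \<le> b x y" using bcd ccd by (auto simp: conductance_def)
  define f where "f = (\<lambda>y. delta x y - delta o0 y)"
  have fb: "finite_energy b f" unfolding f_def
    by (rule FE_diff[OF delta_props(1)[OF bcd lfb] delta_props(1)[OF bcd lfb] b])
  define K where "K = sqrt (Qe b f / 4)"
  have K0: "K \<ge> 0" using Qe_nn[of b f, OF b] by (simp add: K_def)
  have "\<exists>g. finite_energy c g \<and> g o0 = 0 \<and> (\<forall>u. finite_energy c u \<longrightarrow> energy c g u = energy b f u)"
  proof (rule riesz[OF c conn _ _ K0])
    fix u v assume u: "finite_energy c u" and v: "finite_energy c v"
    show "energy b f (\<lambda>x. u x + v x) = energy b f u + energy b f v"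
      by (rule E_add2[OF b fb FE_mono(1)[OF b bc u] FE_mono(1)[OF b bc v]])
  next
    fix a u assume u: "finite_energy c u"
    show "energy b f (\<lambda>x. a * u x) = a * energy b f u"
      by (rule E_scale2[OF b fb FE_mono(1)[OF b bc u]])
  next
    fix u assume u: "finite_energy c u"
    have ub: "finite_energy b u" by (rule FE_mono(1)[OF b bc u])
    have "(cmod (energy b f u))\<^sup>2 \<le> Qe b f / 2 * (Qe b u / 2)" by (rule CS[OF b fb ub])
    also have "\<dots> \<le> Qe b f / 4 * Qe c u"
      using FE_mono(2)[OF b bc u] Qe_nn[of b f, OF b] by (simp add: mult_left_mono)
    finally have "cmod (energy b f u) \<le> sqrt (Qe b f / 4 * Qe c u)" by (simp add: real_le_rsqrt)
    moreover have "sqrt (Qe b f / 4 * Qe c u) = K * sqrt (Qe c u)" by (simp only: K_def real_sqrt_mult)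
    ultimately show "cmod (energy b f u) \<le> K * sqrt (Qe c u)" by simp
  qed
  from the_riesz[OF c conn this] show ?thesis unfolding incl_adj_def f_def .
qed

lemma graph_pt:
  assumes bcd: "conductance b" and ccd: "conductance c" and bc: "\<And>x y. b x y \<le> c x y"
    and lfb: "locally_finite b" and conn: "net_connected c"
  shows "(reprod c o0 x, incl_adj c b o0 (\<lambda>y. delta x y - delta o0 y)) \<in> lap_adj_graph c b"
proof -
  have c: "\<And>x y. 0 \<le> c x y" and b: "\<And>x y. 0 \<le> b x y" using bcd ccd by (auto simp: conductance_def)
  note R = reprod_prop[OF c conn, of o0 x]
  note I = incl_prop[OF bcd ccd bc lfb conn, of o0 x]
  show ?thesis unfolding lap_adj_graph_def
  proof (intro CollectI case_prodI conjI ballI)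
    show "finite_energy c (reprod c o0 x)" using R by blast
    show "finite_energy c (incl_adj c b o0 (\<lambda>y. delta x y - delta o0 y))" using I by blast
    fix u assume "u \<in> lap_dom c b"
    then have u: "finite_energy c u" and lu: "finite_energy c (laplacian b u)" by (auto simp: lap_dom_def)
    have ub: "finite_energy b u" by (rule FE_mono(1)[OF b bc u])
    have "energy c (incl_adj c b o0 (\<lambda>y. delta x y - delta o0 y)) u = energy b (\<lambda>y. delta x y - delta o0 y) u"
      using I u by blast
    also have "\<dots> = energy b (delta x) u - energy b (delta o0) u"
      by (rule E_diff1[OF b ub delta_props(1)[OF bcd lfb] delta_props(1)[OF bcd lfb]])
    also have "\<dots> = laplacian b u x - laplacian b u o0" using delta_props(2)[OF bcd lfb] by simp
    also have "\<dots> = energy c (reprod c o0 x) (laplacian b u)" using R lu by simp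
    finally show "energy c (incl_adj c b o0 (\<lambda>y. delta x y - delta o0 y)) u = energy c (reprod c o0 x) (laplacian b u)" .
  qed
qed

lemma graph_lin:
  assumes c: "\<And>x y. 0 \<le> c x y" and F: "finite F" and Z: "\<And>f. f \<in> F \<Longrightarrow> (f, Z f) \<in> lap_adj_graph c b"
  shows "((\<lambda>y. \<Sum>f\<in>F. a f * f y), (\<lambda>y. \<Sum>f\<in>F. a f * Z f y)) \<in> lap_adj_graph c b"
  using F Z
proof (induction F rule: finite_induct)
  case empty
  show ?case unfolding lap_adj_graph_def using FE_const[of c 0] by (simp add: E_const1)
next
  case (insert g F)
  have IH: "((\<lambda>y. \<Sum>f\<in>F. a f * f y), (\<lambda>y. \<Sum>f\<in>F. a f * Z f y)) \<in> lap_adj_graph c b"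
    using insert by blast
  have gZ: "(g, Z g) \<in> lap_adj_graph c b" using insert by blast
  define W where "W = (\<lambda>y. \<Sum>f\<in>F. a f * f y)"
  define WZ where "WZ = (\<lambda>y. \<Sum>f\<in>F. a f * Z f y)"
  have Wf: "finite_energy c W" and WZf: "finite_energy c WZ"
    and Weq: "\<And>u. u \<in> lap_dom c b \<Longrightarrow> energy c WZ u = energy c W (laplacian b u)"
    using IH by (auto simp: lap_adj_graph_def W_def WZ_def)
  have gf: "finite_energy c g" and Zf: "finite_energy c (Z g)"
    and geq: "\<And>u. u \<in> lap_dom c b \<Longrightarrow> energy c (Z g) u = energy c g (laplacian b u)"
    using gZ by (auto simp: lap_adj_graph_def)
  have e1: "(\<lambda>y. \<Sum>f\<in>insert g F. a f * f y) = (\<lambda>y. a g * g y + W y)"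
    using insert by (simp add: W_def)
  have e2: "(\<lambda>y. \<Sum>f\<in>insert g F. a f * Z f y) = (\<lambda>y. a g * Z g y + WZ y)"
    using insert by (simp add: WZ_def)
  show ?case unfolding e1 e2 lap_adj_graph_def
  proof (intro CollectI case_prodI conjI ballI)
    show "finite_energy c (\<lambda>y. a g * g y + W y)" by (rule FE_add[OF FE_scale[OF gf] Wf c])
    show "finite_energy c (\<lambda>y. a g * Z g y + WZ y)" by (rule FE_add[OF FE_scale[OF Zf] WZf c])
    fix u assume uD: "u \<in> lap_dom c b"
    then have u: "finite_energy c u" and lu: "finite_energy c (laplacian b u)" by (auto simp: lap_dom_def)
    have "energy c (\<lambda>y. a g * Z g y + WZ y) u = energy c (\<lambda>y. a g * Z g y) u + energy c WZ u"
      by (rule E_add1[OF c u FE_scale[OF Zf] WZf])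
    also have "\<dots> = cnj (a g) * energy c (Z g) u + energy c WZ u" using E_scale1[OF c u Zf] by simp
    also have "\<dots> = cnj (a g) * energy c g (laplacian b u) + energy c W (laplacian b u)"
      using geq[OF uD] Weq[OF uD] by simp
    also have "\<dots> = energy c (\<lambda>y. a g * g y) (laplacian b u) + energy c W (laplacian b u)"
      using E_scale1[OF c lu gf] by simp
    also have "\<dots> = energy c (\<lambda>y. a g * g y + W y) (laplacian b u)"
      by (rule E_add1[OF c lu FE_scale[OF gf] Wf, symmetric])
    finally show "energy c (\<lambda>y. a g * Z g y + WZ y) u = energy c (\<lambda>y. a g * g y + W y) (laplacian b u)" .
  qed
qed

theorem lemma3p19:
  fixes c b :: "'a::countable \<Rightarrow> 'a \<Rightarrow> real" and o0 :: 'a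
  assumes "conductance c" and "conductance b"
    and "\<And>x y. b x y \<le> c x y"
    and "locally_finite c" and "net_connected c"
    and "locally_finite b" and "net_connected b"
  shows "lin_span (range (reprod c o0)) \<subseteq> lap_adj_dom c b \<and>
    (\<forall>x. (reprod c o0 x, incl_adj c b o0 (\<lambda>y. delta x y - delta o0 y)) \<in> lap_adj_graph c b)"
proof
  note gp = graph_pt[OF assms(2) assms(1) assms(3) assms(6) assms(5)]
  have c: "\<And>x y. 0 \<le> c x y" using assms(1) by (auto simp: conductance_def)
  show "\<forall>x. (reprod c o0 x, incl_adj c b o0 (\<lambda>y. delta x y - delta o0 y)) \<in> lap_adj_graph c b"
    using gp by blast
  show "lin_span (range (reprod c o0)) \<subseteq> lap_adj_dom c b"
  proof
    fix w assume "w \<in> lin_span (range (reprod c o0))"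
    then obtain F a where w: "w = (\<lambda>y. \<Sum>f\<in>F. a f * f y)" and F: "finite F" "F \<subseteq> range (reprod c o0)"
      by (auto simp: lin_span_def)
    define X where "X f = (SOME x. f = reprod c o0 x)" for f
    define Z where "Z f = incl_adj c b o0 (\<lambda>y. delta (X f) y - delta o0 y)" for f
    have "(f, Z f) \<in> lap_adj_graph c b" if "f \<in> F" for f
    proof -
      have "\<exists>x. f = reprod c o0 x" using that F by auto
      then have "f = reprod c o0 (X f)" unfolding X_def by (rule someI_ex)
      then show ?thesis unfolding Z_def using gp[where x="X f"] by metis
    qed
    from graph_lin[OF c F(1) this] show "w \<in> lap_adj_dom c b"
      unfolding lap_adj_dom_def w by blast
  qed
qed

end
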